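(* Let $0<\tau_1\le\dots\le\tau_n$, set $\tau_{n+1}=\infty$, and let $S\ge\frac14$. Define $$j_1^*=\inf\Big\{m\in[n]: S\Big(\sum_{i=1}^m\frac1{\tau_i}\Big)^{-1}<\tau_{m+1}\Big\},\qquad t_1=S\Big(\sum_{i=1}^{j_1^*}\frac1{\tau_i}\Big)^{-1},$$ $$t_2=\min_{j\in[n]}\Big[\Big(\sum_{i=1}^j\frac1{\tau_i}\Big)^{-1}(S+j)\Big].$$ Then $t_1\le t_2\le6t_1$.
   Context: $[n]=\{1,\dots,n\}$. The set defining $j_1^*$ is nonempty since $\tau_{n+1}=\infty$. *)

theory Defs
  imports "HOL-Analysis.Analysis"
begin

definition tau_ext :: "(nat \<Rightarrow> real) \<Rightarrow> nat \<Rightarrow> nat \<Rightarrow> ereal" where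
  "tau_ext \<tau> n m = (if m = n + 1 then \<infinity> else ereal (\<tau> m))"

end

theory Submission
  imports Defs
begin

theorem mainTheorem14:
  fixes \<tau> :: "nat \<Rightarrow> real" and n :: nat and S :: real
  assumes n: "n \<ge> 1"
    and pos: "0 < \<tau> 1"
    and mono: "\<forall>i\<in>{1..<n}. \<tau> i \<le> \<tau> (Suc i)"
    and S: "S \<ge> 1/4"
  defines "j1 \<equiv> Inf {m \<in> {1..n}. ereal (S * inverse (\<Sum>i=1..m. 1 / \<tau> i)) < tau_ext \<tau> n (m + 1)}"
  defines "t1 \<equiv> S * inverse (\<Sum>i=1..j1. 1 / \<tau> i)"
  defines "t2 \<equiv> Min ((\<lambda>j. inverse (\<Sum>i=1..j. 1 / \<tau> i) * (S + real j)) ` {1..n})"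
  shows "t1 \<le> t2 \<and> t2 \<le> 6 * t1"
proof -
  define H where "H m = (\<Sum>i=1..m. 1 / \<tau> i)" for m
  define A where "A = {m \<in> {1..n}. ereal (S * inverse (H m)) < tau_ext \<tau> n (m + 1)}"
  have monok: "\<tau> i \<le> \<tau> k" if "1 \<le> i" "i \<le> k" "k \<le> n" for i k
    using that
  proof (induction k)
    case 0 then show ?case by simp
  next
    case (Suc k)
    show ?case
    proof (cases "i = Suc k")
      case True then show ?thesis by simp
    next
      case False
      then have "i \<le> k" using Suc by simp
      then have "\<tau> i \<le> \<tau> k" using Suc by simp
      also have "\<tau> k \<le> \<tau> (Suc k)" using mono Suc \<open>i \<le> k\<close> by auto
      finally show ?thesis .
    qed
  qed
  have tpos: "\<tau> i > 0" if "1 \<le> i" "i \<le> n" for i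
    using monok[of 1 i] that pos by simp
  have Hpos: "H m > 0" if "1 \<le> m" "m \<le> n" for m
    unfolding H_def using that tpos by (intro sum_pos) auto
  have Hmono: "H j \<le> H k" if "j \<le> k" "k \<le> n" for j k
    unfolding H_def using that by (intro sum_mono2) (auto intro!: less_imp_le[OF tpos])
  have nA: "n \<in> A" unfolding A_def tau_ext_def using n by simp
  have j1A: "j1 = Inf A" unfolding j1_def A_def H_def by simp
  have j1in: "j1 \<in> A" using nA j1A by (metis Inf_nat_def LeastI)
  have j1le: "j1 \<le> m" if "m \<in> A" for m using that j1A by (simp add: cInf_lower)
  have j1n: "1 \<le> j1" "j1 \<le> n" using j1in A_def by auto
  have t1eq: "t1 = S / H j1" unfolding t1_def H_def by (simp add: field_simps)
  have Spos: "S > 0" using S by simp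
  define f where "f j = inverse (H j) * (S + real j)" for j
  have t2eq: "t2 = Min (f ` {1..n})" unfolding t2_def f_def H_def by simp
  have fin: "finite (f ` {1..n})" "f ` {1..n} \<noteq> {}" using n by auto
  have part1: "t1 \<le> f j" if j: "1 \<le> j" "j \<le> n" for j
  proof -
    have key: "S * H j \<le> (S + j) * H j1"
    proof (cases "j \<le> j1")
      case True
      then have "H j \<le> H j1" using Hmono j1n by simp
      moreover have "H j1 > 0" using Hpos j1n by simp
      ultimately show ?thesis using Spos
        by (smt (verit) mult_left_mono mult_right_mono of_nat_0_le_iff)
    next
      case False
      then have lt: "j1 < n" using j by simp
      have c: "ereal (S * inverse (H j1)) < tau_ext \<tau> n (j1 + 1)" using j1in A_def by simp
      then have c2: "S / H j1 < \<tau> (j1 + 1)" using lt unfolding tau_ext_def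
        by (simp add: divide_inverse)
      have Hj1: "H j1 > 0" using Hpos j1n by simp
      have b: "1 / \<tau> i \<le> H j1 / S" if "i \<in> {j1+1..j}" for i
      proof -
        have "\<tau> (j1+1) \<le> \<tau> i" using monok[of "j1+1" i] that j by simp
        then have "S / H j1 < \<tau> i" using c2 by simp
        moreover have "S / H j1 > 0" using Spos Hj1 by simp
        ultimately have "1 / \<tau> i < 1 / (S / H j1)"
        proof -
          assume a: "S / H j1 < \<tau> i" and b: "0 < S / H j1"
          have "0 < \<tau> i" using a b by linarith
          then have "0 < \<tau> i * (S / H j1)" using b by (rule mult_pos_pos)
          from divide_strict_left_mono[OF a zero_less_one this] show ?thesis .
        qed
        then show ?thesis by simp
      qed
      have split: "H j = H j1 + (\<Sum>i=j1+1..j. 1 / \<tau> i)"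
      proof -
        have e: "j = j1 + (j - j1)" using False by simp
        have "H (j1 + (j - j1)) = H j1 + (\<Sum>i=j1+1..j1 + (j - j1). 1 / \<tau> i)"
          unfolding H_def by (rule sum.ub_add_nat) (use j1n in simp)
        then show ?thesis using e by simp
      qed
      have "(\<Sum>i=j1+1..j. 1 / \<tau> i) \<le> (\<Sum>i=j1+1..j. H j1 / S)"
        by (rule sum_mono) (use b in auto)
      also have "\<dots> = real (j - j1) * (H j1 / S)" by simp
      finally have "S * H j \<le> S * H j1 + real (j - j1) * H j1"
        using split Spos by (simp add: field_simps)
      also have "\<dots> \<le> (S + j) * H j1" using False Hj1
        by (simp add: algebra_simps of_nat_diff)
      finally show ?thesis .
    qed
    have "H j > 0" "H j1 > 0" using Hpos j j1n by auto
    then show ?thesis unfolding t1eq f_def using key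
      by (simp add: field_simps)
  qed
  have p1: "t1 \<le> t2" unfolding t2eq using fin part1 by (subst Min_ge_iff) auto
  have jS: "real j1 \<le> S + 1"
  proof (cases "j1 \<ge> 2")
    case False then show ?thesis using Spos by simp
  next
    case True
    define i where "i = j1 - 1"
    have i: "1 \<le> i" "i < j1" "i + 1 = j1" using True i_def by auto
    have "i \<notin> A"
    proof
      assume "i \<in> A" then have "j1 \<le> i" by (rule j1le) then show False using i by simp
    qed
    then have "\<not> ereal (S * inverse (H i)) < tau_ext \<tau> n (i + 1)"
      using i j1n A_def by auto
    then have "\<tau> (i+1) \<le> S / H i" using i j1n unfolding tau_ext_def
      by (simp add: divide_inverse)
    moreover have Hi: "H i > 0" using Hpos i j1n by simp
    ultimately have up: "\<tau> (i+1) * H i \<le> S" by (simp add: field_simps)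
    have tp: "\<tau> (i+1) > 0" using tpos i j1n by simp
    have "(\<Sum>k=1..i. 1 / \<tau> (i+1)) \<le> H i"
      unfolding H_def
    proof (rule sum_mono)
      fix k assume k: "k \<in> {1..i}"
      have "\<tau> k \<le> \<tau> (i+1)" using monok[of k "i+1"] k i j1n by simp
      moreover have "\<tau> k > 0" using tpos k i j1n by simp
      ultimately show "1 / \<tau> (i+1) \<le> 1 / \<tau> k" by (simp add: frac_le)
    qed
    then have "real i / \<tau> (i+1) \<le> H i" by simp
    then have "real i \<le> \<tau> (i+1) * H i" using tp by (simp add: field_simps)
    then have "real i \<le> S" using up by simp
    then show ?thesis using i by simp
  qed
  have "t2 \<le> f j1" unfolding t2eq using fin j1n by (intro Min_le) auto
  also have "f j1 \<le> 6 * t1"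
  proof -
    have Hj1: "H j1 > 0" using Hpos j1n by simp
    have "S + real j1 \<le> 6 * S" using jS S by simp
    then show ?thesis unfolding f_def t1eq using Hj1
      by (simp add: field_simps)
  qed
  finally show ?thesis using p1 by simp
qed

end
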